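(* Let $f:[0,1]\to[0,\infty)$ be a function that is concave and increasing on $[0,\tfrac12]$ and satisfies $f(x)=f(1-x)$ for all $x\in[0,1]$. Let $k\ge 1$ and let $x_1,\dots,x_k\in[-1,1]$ be real numbers such that $x:=\sum_{i=1}^k x_i\in[-1,1]$. Then \[ f(|x|)\le \sum_{i=1}^k f(|x_i|). \] *)

theory Defs
  imports "HOL-Analysis.Analysis"
begin

end

theory Submission
  imports Defs
begin

lemma conc_lin:
  fixes f :: "real \<Rightarrow> real"
  assumes conc: "concave_on {0..1/2} f" and f0: "f 0 \<ge> 0"
    and u: "0 \<le> u" "u \<le> s" and s: "0 < s" "s \<le> 1/2"
  shows "f u \<ge> (u / s) * f s"
proof -
  have A: "f ((1 - u/s) *\<^sub>R 0 + (u/s) *\<^sub>R s) \<ge> (1 - u/s) * f 0 + (u/s) * f s"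
    by (rule concave_onD[OF conc]) (use u s in \<open>auto simp: field_simps\<close>)
  have B: "(1 - u/s) *\<^sub>R 0 + (u/s) *\<^sub>R s = u" using s by simp
  have "f u \<ge> (1 - u/s) * f 0 + (u/s) * f s" using A unfolding B .
  moreover have "(1 - u/s) * f 0 \<ge> 0" using u s f0 by (intro mult_nonneg_nonneg) (auto simp: field_simps)
  ultimately show ?thesis by linarith
qed

definition dd :: "real \<Rightarrow> real" where "dd x = min (frac x) (1 - frac x)"

lemma dd_range: "0 \<le> dd x" "dd x \<le> 1/2"
  unfolding dd_def min_def using frac_ge_0[of x] frac_lt_1[of x] by (auto split: if_splits)

lemma dd_add: "dd (a + b) \<le> dd a + dd b"
proof -
  have h: "0 \<le> frac a" "frac a < 1" "0 \<le> frac b" "frac b < 1"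
    using frac_ge_0 frac_lt_1 by auto
  show ?thesis
    unfolding dd_def frac_add[of a b] min_def
    using h by (simp split: if_splits; linarith)
qed

lemma phi_sub:
  fixes f :: "real \<Rightarrow> real"
  assumes conc: "concave_on {0..1/2} f" and f0: "f 0 \<ge> 0"
    and incr: "mono_on {0..1/2} f"
    and w: "0 \<le> w" "w \<le> 1/2" and u: "0 \<le> u" "u \<le> 1/2" and v: "0 \<le> v" "v \<le> 1/2"
    and wuv: "w \<le> u + v"
  shows "f w \<le> f u + f v"
proof (cases "u + v \<le> 1/2")
  case True
  show ?thesis
  proof (cases "u + v = 0")
    case True
    then have "u = 0" "v = 0" "w = 0" using u v w wuv by auto
    then show ?thesis using f0 by simp
  next
    case False
    let ?s = "u + v"
    have s: "0 < ?s" using False u v by linarith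
    have "f u \<ge> (u / ?s) * f ?s" by (rule conc_lin[OF conc f0]) (use u v s True in auto)
    moreover have "f v \<ge> (v / ?s) * f ?s" by (rule conc_lin[OF conc f0]) (use u v s True in auto)
    moreover have "(u / ?s) * f ?s + (v / ?s) * f ?s = f ?s"
      by (simp only: distrib_right[symmetric] add_divide_distrib[symmetric]) (use s in simp)
    moreover have "f w \<le> f ?s" using incr w wuv True u v
      by (auto intro: mono_onD)
    ultimately show ?thesis by linarith
  qed
next
  case False
  have h: "(0::real) < 1/2" by simp
  have "f u \<ge> (u / (1/2)) * f (1/2)" by (rule conc_lin[OF conc f0]) (use u in auto)
  moreover have "f v \<ge> (v / (1/2)) * f (1/2)" by (rule conc_lin[OF conc f0]) (use v in auto)
  moreover have fh: "f (1/2) \<ge> 0" using mono_onD[OF incr, of 0 "1/2"] f0 by auto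
  moreover have "f w \<le> f (1/2)" using incr w by (auto intro: mono_onD)
  moreover have "(u / (1/2)) * f (1/2) + (v / (1/2)) * f (1/2) = 2 * (u+v) * f (1/2)"
    by (simp add: field_simps)
  moreover have "2 * (u+v) * f (1/2) \<ge> f (1/2)"
  proof -
    have "1 \<le> 2*(u+v)" using False by (simp add: not_le)
    from mult_right_mono[OF this fh] show ?thesis by simp
  qed
  ultimately show ?thesis by linarith
qed

theorem lemma1:
  fixes f :: "real \<Rightarrow> real" and k :: nat and xs :: "nat \<Rightarrow> real"
  assumes nonneg: "\<forall>t\<in>{0..1}. f t \<ge> 0"
    and conc: "concave_on {0..1/2} f"
    and incr: "mono_on {0..1/2} f"
    and symm: "\<forall>t\<in>{0..1}. f t = f (1 - t)"
    and k: "k \<ge> 1"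
    and xs: "\<forall>i\<in>{1..k}. xs i \<in> {-1..1}"
    and sum: "(\<Sum>i=1..k. xs i) \<in> {-1..1}"
  shows "f \<bar>\<Sum>i=1..k. xs i\<bar> \<le> (\<Sum>i=1..k. f \<bar>xs i\<bar>)"
proof -
  define G where "G x = f (dd x)" for x
  have f0: "f 0 \<ge> 0" using nonneg by simp
  have Gsub: "G (a + b) \<le> G a + G b" for a b
    unfolding G_def
    by (rule phi_sub[OF conc f0 incr dd_range(1) dd_range(2) dd_range(1) dd_range(2) dd_range(1) dd_range(2) dd_add])
  have Gsum: "G (\<Sum>i\<in>A. xs i) \<le> (\<Sum>i\<in>A. G (xs i))" if "finite A" "A \<noteq> {}" for A
    using that
  proof (induction A rule: finite_ne_induct)
    case (singleton x) then show ?case by simp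
  next
    case (insert x F)
    then show ?case using Gsub[of "xs x" "sum xs F"] by simp
  qed
  have GF: "G x = f \<bar>x\<bar>" if xr: "x \<in> {-1..1}" for x
  proof -
    consider "x = 1" | "x = -1" | "0 \<le> x" "x < 1" | "-1 < x" "x < 0" 
    proof -
      have "x = 1 \<or> x = -1 \<or> (0 \<le> x \<and> x < 1) \<or> (-1 < x \<and> x < 0)" using xr by (simp only: atLeastAtMost_iff) linarith
      then show "(x = 1 \<Longrightarrow> thesis) \<Longrightarrow> (x = - 1 \<Longrightarrow> thesis) \<Longrightarrow> (0 \<le> x \<Longrightarrow> x < 1 \<Longrightarrow> thesis) \<Longrightarrow> (- 1 < x \<Longrightarrow> x < 0 \<Longrightarrow> thesis) \<Longrightarrow> thesis" for thesis by blast
    qed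
    then show ?thesis
    proof cases
      case 1
      have "f 1 = f 0" using symm[rule_format, of 1] by simp
      then show ?thesis using 1 unfolding G_def dd_def by simp
    next
      case 2
      have fr: "frac x = 0" unfolding 2 by (metis frac_of_int of_int_minus of_int_1)
      have "f 1 = f 0" using symm[rule_format, of 1] by simp
      then show ?thesis using 2 unfolding G_def dd_def fr by simp
    next
      case 3
      then have "frac x = x" by (simp add: frac_eq)
      moreover have "f x = f (1 - x)" using symm[rule_format, of x] 3 by simp
      ultimately show ?thesis using 3 unfolding G_def dd_def min_def
        by simp
    next
      case 4
      have "frac x = x + 1"
        by (subst frac_unique_iff) (use 4 in auto)
      moreover have "f (-x) = f (1 - (-x))" using symm[rule_format, of "-x"] 4 by simp
      ultimately show ?thesis using 4 unfolding G_def dd_def min_def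
        by (simp add: add.commute)
    qed
  qed
  have ne: "{1..k} \<noteq> {}" using k by auto
  have "f \<bar>\<Sum>i=1..k. xs i\<bar> = G (\<Sum>i=1..k. xs i)" using GF[OF sum] by simp
  also have "\<dots> \<le> (\<Sum>i=1..k. G (xs i))" using Gsum[OF _ ne] by simp
  also have "\<dots> = (\<Sum>i=1..k. f \<bar>xs i\<bar>)" using GF xs by (intro sum.cong) auto
  finally show ?thesis .
qed

end
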